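(* Let $n\ge3$ and $m,k\ge1$ be integers, let $t,u\in\mathbb{Z}_n$ with $t^2\equiv u\pmod n$, and let $G$ be the set of all $m\times k$ matrices over $\mathbb{Z}_n$ with the operation $[a_{ij}]*[b_{ij}]=[(t a_{ij}+u b_{ij})\bmod n]$. If $t+u\equiv 1\pmod n$, then $(G,* )$ is an AG-band.
   Context: An AG-groupoid is a set with a binary operation satisfying $(a*b)*c=(c*b)*a$ for all $a,b,c$. An AG-band is an AG-groupoid in which every element is idempotent, i.e. $a*a=a$ for all $a$. *)

theory Defs
  imports Main
begin

definition ag_groupoid :: "'a set \<Rightarrow> ('a \<Rightarrow> 'a \<Rightarrow> 'a) \<Rightarrow> bool" where
  "ag_groupoid G f \<longleftrightarrow>
     (\<forall>a\<in>G. \<forall>b\<in>G. f a b \<in> G) \<and>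
     (\<forall>a\<in>G. \<forall>b\<in>G. \<forall>c\<in>G. f (f a b) c = f (f c b) a)"

definition ag_band :: "'a set \<Rightarrow> ('a \<Rightarrow> 'a \<Rightarrow> 'a) \<Rightarrow> bool" where
  "ag_band G f \<longleftrightarrow> ag_groupoid G f \<and> (\<forall>a\<in>G. f a a = a)"

text \<open>m x k matrices over Z_n: entries (representatives in {0..n-1}) indexed by
  i < m, j < k; extended by 0 outside the index range so that matrices are
  uniquely represented.\<close>
definition zmats :: "int \<Rightarrow> nat \<Rightarrow> nat \<Rightarrow> (nat \<Rightarrow> nat \<Rightarrow> int) set" where
  "zmats n m k = {A. (\<forall>i j. i < m \<and> j < k \<longrightarrow> 0 \<le> A i j \<and> A i j < n) \<and>
                      (\<forall>i j. \<not> (i < m \<and> j < k) \<longrightarrow> A i j = 0)}"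

definition zmat_op :: "int \<Rightarrow> nat \<Rightarrow> nat \<Rightarrow> int \<Rightarrow> int \<Rightarrow>
    (nat \<Rightarrow> nat \<Rightarrow> int) \<Rightarrow> (nat \<Rightarrow> nat \<Rightarrow> int) \<Rightarrow> (nat \<Rightarrow> nat \<Rightarrow> int)" where
  "zmat_op n m k t u A B = (\<lambda>i j. if i < m \<and> j < k then (t * A i j + u * B i j) mod n else 0)"

end

theory Submission
  imports Defs
begin

lemma key:
  fixes n t u a b c :: int
  assumes "t^2 mod n = u mod n"
  shows "(t * ((t*a + u*b) mod n) + u*c) mod n = (t * ((t*c + u*b) mod n) + u*a) mod n"
proof -
  have e1: "\<And>x y. (t * (x mod n) + y) mod n = (t*x + y) mod n"
    by (metis mod_add_left_eq mod_mult_right_eq)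
  obtain q where q: "t^2 = u + n*q"
    using assms by (metis mod_eqE)
  have h1: "(t*(t*a+u*b) + u*c) = (u*a + u*c + t*u*b) + (q*a)*n"
    using q by (simp add: algebra_simps power2_eq_square)
  have h2: "(t*(t*c+u*b) + u*a) = (u*a + u*c + t*u*b) + (q*c)*n"
    using q by (simp add: algebra_simps power2_eq_square)
  show ?thesis unfolding e1 h1 h2 mod_mult_self1 ..
qed

theorem mainTheorem8:
  fixes n t u :: int and m k :: nat
  assumes "n \<ge> 3" and "m \<ge> 1" and "k \<ge> 1"
    and "0 \<le> t" and "t < n" and "0 \<le> u" and "u < n"
    and "t^2 mod n = u mod n"
    and "(t + u) mod n = 1 mod n"
  shows "ag_band (zmats n m k) (zmat_op n m k t u)"
proof -
  have cl: "\<forall>a\<in>zmats n m k. \<forall>b\<in>zmats n m k. zmat_op n m k t u a b \<in> zmats n m k"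
    using assms(1) unfolding zmats_def zmat_op_def by auto
  have ag: "\<forall>a\<in>zmats n m k. \<forall>b\<in>zmats n m k. \<forall>c\<in>zmats n m k.
     zmat_op n m k t u (zmat_op n m k t u a b) c = zmat_op n m k t u (zmat_op n m k t u c b) a"
  proof (intro ballI ext)
    fix a b c i j
    show "zmat_op n m k t u (zmat_op n m k t u a b) c i j = zmat_op n m k t u (zmat_op n m k t u c b) a i j"
      using key[OF assms(8), of "a i j" "b i j" "c i j"] unfolding zmat_op_def by (cases "i < m \<and> j < k") auto
  qed
  have id: "\<forall>a\<in>zmats n m k. zmat_op n m k t u a a = a"
  proof
    fix a assume a: "a \<in> zmats n m k"
    have "\<And>i j. i < m \<and> j < k \<Longrightarrow> (t * a i j + u * a i j) mod n = a i j"
    proof -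
      fix i j assume ij: "i < m \<and> j < k"
      have r: "0 \<le> a i j" "a i j < n" using a ij by (auto simp: zmats_def)
      have "(t * a i j + u * a i j) mod n = ((t+u) * a i j) mod n" by (simp add: algebra_simps)
      also have "\<dots> = (((t+u) mod n) * a i j) mod n" by (rule mod_mult_left_eq[symmetric])
      also have "\<dots> = a i j" using assms(1,9) r by simp
      finally show "(t * a i j + u * a i j) mod n = a i j" .
    qed
    then show "zmat_op n m k t u a a = a" using a unfolding zmat_op_def zmats_def by (auto intro!: ext)
  qed
  show ?thesis using cl ag id by (simp add: ag_band_def ag_groupoid_def)
qed

end
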